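(* Let $\varphi:(0,1)\to[0,\infty)$ satisfy (P1) $\int_0^1\varphi^2(y)\,dy<\infty$; (P2) $\varphi$ is discontinuous only on a set of Lebesgue measure zero; (P3) there is $a\in[0,1/2)$ such that $\varphi$ is nonincreasing on $(0,a)$, nondecreasing on $(1-a,1)$, and bounded on $(a,1-a)$; (P4) $\int_{1-x}^1\varphi(y)\,dy>0$ for all $x\in(0,1)$. Suppose $G$ is a distribution on $\mathbb{R}$ with a Lebesgue density $g$ satisfying $g(x)>0$ for all $x\in\mathbb{R}$. Then $$\widetilde\Gamma_{\varphi,\mathrm{unif}}\ge\liminf_{q\to\infty}\frac{g(q)}{g(-q)}.$$
   Context: $\widetilde\Gamma_{\varphi,\mathrm{unif}}:=\sup_{x\in(0,1)}\pi(x)/(1-\pi(x))$ (with the ratio read as $+\infty$ if $\pi(x)=1$), where $\pi(x)=\dfrac{\int_0^\infty\varphi(G(y)-G(-y))\mathbf{1}\{G(y)-G(-y)\ge1-x\}\,dG(y)}{\int_{1-x}^1\varphi(y)\,dy}$. Equivalently, $\widetilde\Gamma_{\varphi,\mathrm{unif}}$ is the design sensitivity, against i.i.d. pair differences with distribution $G$, of the uniform general signed rank test that rejects Rosenbaum's sensitivity null with parameter $\Gamma$ iff $T_n(x)\ge f_{\alpha,n}(x)$ for some $x\in(0,1)$, where $T_n(x)=\sum_{i=\lceil(1-x)(n+1)\rceil}^n\varphi(i/(n+1))\mathbf{1}\{Y_{(i)}>0\}$ (ordering by absolute value) and $f_{\alpha,n}(x)=\lambda_n^{-1}[\log(1/\alpha)+\sum_{i=\lceil(1-x)(n+1)\rceil}^n\log(1+\rho_\Gamma(e^{c_i\lambda_n}-1))]$,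 $c_i=\varphi(i/(n+1))$, $\rho_\Gamma=\Gamma/(1+\Gamma)$, $\lambda_n=\sqrt{2\log(1/\alpha)/\sigma_n^2(x_0)}$, $\sigma_n^2(x)=\rho_\Gamma(1-\rho_\Gamma)\sum_{i=\lceil(1-x)(n+1)\rceil}^nc_i^2$. *)

theory Defs
  imports "HOL-Analysis.Analysis"
begin

definition distG :: "(real \<Rightarrow> real) \<Rightarrow> real measure" where
  "distG g = density lebesgue (\<lambda>x. ennreal (g x))"

definition cdfG :: "(real \<Rightarrow> real) \<Rightarrow> real \<Rightarrow> real" where
  "cdfG g y = measure (distG g) {..y}"

definition pi_unif :: "(real \<Rightarrow> real) \<Rightarrow> (real \<Rightarrow> real) \<Rightarrow> real \<Rightarrow> real" where
  "pi_unif \<phi> g x =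
     (LINT y:{0<..}|distG g.
         \<phi> (cdfG g y - cdfG g (-y)) * indicator {t. cdfG g t - cdfG g (-t) \<ge> 1 - x} y)
     / (LINT y:{1-x<..<1}|lebesgue. \<phi> y)"

definition odds :: "real \<Rightarrow> ereal" where
  "odds p = (if p = 1 then \<infinity> else ereal (p / (1 - p)))"

definition Gamma_unif :: "(real \<Rightarrow> real) \<Rightarrow> (real \<Rightarrow> real) \<Rightarrow> ereal" where
  "Gamma_unif \<phi> g = (SUP x\<in>{0<..<1}. odds (pi_unif \<phi> g x))"

end

theory Submission
  imports Defs "HOL-Probability.Probability"
begin

locale gctx =
  fixes g :: "real \<Rightarrow> real"
  assumes g_meas[measurable]: "g \<in> borel_measurable lebesgue"
    and g_pos: "\<And>x. g x > 0"
    and g_prob: "emeasure (distG g) UNIV = 1"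
begin

abbreviation "X \<equiv> distG g"

lemma gp: "\<not> g y \<le> 0" using g_pos[of y] by simp
lemma id_leb[measurable]: "(\<lambda>x::real. x) \<in> borel_measurable lebesgue"
  by (intro measurable_completion measurable_ident_sets) simp

definition "P = distr X borel (\<lambda>x. x)"
definition "F = cdfG g"
definition "H t = F t - F (-t)"
definition "T y = H \<bar>y\<bar>"

lemma sets_X[simp, measurable_cong]: "sets X = sets lebesgue"
  by (simp add: distG_def)
lemma space_X[simp]: "space X = UNIV"
  by (simp add: distG_def)
lemma prob_X: "prob_space X"
  by (rule prob_spaceI) (simp add: g_prob)
lemma meas_id: "(\<lambda>x. x) \<in> X \<rightarrow>\<^sub>M borel"
  by (subst measurable_cong_sets[OF sets_X refl]) (intro measurable_completion measurable_ident_sets, simp)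
lemma realdist_P: "real_distribution P"
  unfolding P_def using prob_space.real_distribution_distr[OF prob_X] meas_id by simp
lemma emeasure_P: "A \<in> sets borel \<Longrightarrow> emeasure P A = emeasure X A"
  unfolding P_def using meas_id by (simp add: emeasure_distr)
lemma measure_P: "A \<in> sets borel \<Longrightarrow> measure P A = measure X A"
  unfolding measure_def by (simp add: emeasure_P)
lemma F_eq: "F = cdf P"
  by (auto simp: F_def cdfG_def cdf_def2 measure_P)

lemma null_X_leb:
  assumes A: "A \<in> sets lebesgue" and e: "emeasure X A = 0"
  shows "emeasure lebesgue A = 0"
proof -
  have "(\<integral>\<^sup>+ y. ennreal (g y) * indicator A y \<partial>lebesgue) = 0"
    using e A by (simp add: distG_def emeasure_density)
  then have "AE y in lebesgue. ennreal (g y) * indicator A y = 0"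
    using A by (subst (asm) nn_integral_0_iff_AE) auto
  then have "AE y in lebesgue. y \<notin> A"
    by eventually_elim (auto simp: indicator_def ennreal_eq_0_iff gp)
  then show ?thesis using A by (simp add: AE_iff_measurable[OF _ refl])
qed

lemma atom: "measure X {t} = 0"
proof -
  have "emeasure X {t} = (\<integral>\<^sup>+ y. ennreal (g y) * indicator {t} y \<partial>lebesgue)"
    by (simp add: distG_def emeasure_density)
  also have "\<dots> = 0"
  proof (rule nn_integral_0_iff_AE[THEN iffD2])
    have [measurable]: "{t} \<in> sets lebesgue" by simp
    have "{t} \<in> null_sets lebesgue" by (simp add: null_sets_completionI)
    from AE_not_in[OF this] show "AE y in lebesgue. ennreal (g y) * indicator {t} y = 0"
      by eventually_elim auto
  qed measurable
  finally show ?thesis by (simp add: measure_def)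
qed

lemma F_strict: "a < b \<Longrightarrow> F a < F b"
proof -
  assume ab: "a < b"
  interpret real_distribution P by (rule realdist_P)
  have "emeasure P {a<..b} = ennreal (F b - F a)"
    using emeasure_Ioc[of a b] ab by (simp add: F_eq)
  moreover have "emeasure P {a<..b} \<noteq> 0"
  proof
    assume "emeasure P {a<..b} = 0"
    then have "emeasure X {a<..b} = 0" by (simp add: emeasure_P)
    then have "emeasure lebesgue {a<..b} = 0" by (intro null_X_leb) auto
    with ab show False by simp
  qed
  ultimately show ?thesis by (auto simp: ennreal_eq_0_iff)
qed


lemma F_cont: "isCont F t"
proof -
  interpret real_distribution P by (rule realdist_P)
  show ?thesis unfolding F_eq isCont_cdf by (simp add: measure_P atom)
qed

lemma F_bounds: "0 \<le> F t" "F t \<le> 1"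
proof -
  interpret real_distribution P by (rule realdist_P)
  show "0 \<le> F t" "F t \<le> 1" unfolding F_eq by (rule cdf_nonneg, rule cdf_bounded_prob)
qed

lemma F_top: "(F \<longlongrightarrow> 1) at_top"
proof -
  interpret real_distribution P by (rule realdist_P)
  show ?thesis unfolding F_eq by (rule cdf_lim_at_top_prob)
qed

lemma F_bot: "(F \<longlongrightarrow> 0) at_bot"
proof -
  interpret real_distribution P by (rule realdist_P)
  show ?thesis unfolding F_eq by (rule cdf_lim_at_bot)
qed

lemma H_0: "H 0 = 0" by (simp add: H_def)

lemma H_strict: "0 \<le> a \<Longrightarrow> a < b \<Longrightarrow> H a < H b"
  unfolding H_def using F_strict[of a b] F_strict[of "-b" "-a"] by linarith

lemma H_mono: "0 \<le> a \<Longrightarrow> a \<le> b \<Longrightarrow> H a \<le> H b"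
  using H_strict[of a b] by (cases "a = b") auto

lemma H_le1: "H t \<le> 1" unfolding H_def using F_bounds[of t] F_bounds[of "-t"] by linarith

lemma H_lt1: "0 \<le> t \<Longrightarrow> H t < 1" using H_strict[of t "t+1"] H_le1[of "t+1"] by linarith

lemma H_nonneg: "0 \<le> t \<Longrightarrow> 0 \<le> H t" using H_mono[of 0 t] H_0 by simp

lemma H_cont: "isCont H t"
  unfolding H_def[abs_def]
  by (intro continuous_intros isCont_o2[OF _ F_cont] F_cont) 

lemma H_top: "(H \<longlongrightarrow> 1) at_top"
proof -
  have "((\<lambda>t. F (-t)) \<longlongrightarrow> 0) at_top"
    by (rule filterlim_compose[OF F_bot filterlim_uminus_at_bot_at_top])
  then have "((\<lambda>t. F t - F (-t)) \<longlongrightarrow> 1 - 0) at_top"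
    by (intro tendsto_diff F_top)
  then show ?thesis by (simp add: H_def[abs_def])
qed

lemma T_cont: "continuous_on UNIV T"
  unfolding T_def[abs_def]
  by (intro continuous_at_imp_continuous_on ballI isCont_o2[OF _ H_cont] continuous_intros)

lemma T_borel[measurable]: "T \<in> borel_measurable borel"
  using T_cont by (rule borel_measurable_continuous_onI)

lemma T_even: "T (-y) = T y" by (simp add: T_def)
lemma T_range: "0 \<le> T y" "T y < 1" by (simp_all add: T_def H_nonneg H_lt1)

lemma measure_P_sym: "0 \<le> s \<Longrightarrow> measure P {-s..s} = H s"
proof -
  assume s: "0 \<le> s"
  interpret real_distribution P by (rule realdist_P)
  have eq: "{-s..s} = {..s} - {..<-s}" by auto
  have "measure P {-s..s} = measure P {..s} - measure P {..<-s}"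
    unfolding eq using s by (intro finite_measure_Diff) auto
  moreover have "measure P {..-s} = measure P {..<-s} + measure P {-s}"
  proof -
    have eq2: "{..-s} = {..<-s} \<union> {-s}" by auto
    show ?thesis unfolding eq2 by (intro finite_measure_Union) auto
  qed
  moreover have "measure P {-s} = 0" by (simp add: measure_P atom)
  ultimately show ?thesis by (simp add: H_def F_eq cdf_def2)
qed

lemma H_hit: "0 \<le> u \<Longrightarrow> u < 1 \<Longrightarrow> \<exists>s\<ge>0. H s = u"
proof -
  assume u: "0 \<le> u" "u < 1"
  have "eventually (\<lambda>t. H t > u) at_top"
    using H_top u(2) by (rule order_tendstoD)
  then obtain B where B: "\<And>t. t \<ge> B \<Longrightarrow> H t > u" by (auto simp: eventually_at_top_linorder)
  define B' where "B' = max B 0"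
  have "H B' > u" "0 \<le> B'" using B[of B'] by (auto simp: B'_def)
  moreover have "continuous_on {0..B'} H"
    by (intro continuous_at_imp_continuous_on ballI H_cont)
  ultimately obtain s where "0 \<le> s" "s \<le> B'" "H s = u"
    using IVT'[of H 0 u B'] u by (auto simp: H_0)
  then show ?thesis by blast
qed

lemma U_prob: "prob_space (uniform_measure lborel {0..1::real})"
  by (intro prob_space_uniform_measure) auto

lemma push: "distr P borel T = uniform_measure lborel {0..1::real}"
proof (rule cdf_unique)
  interpret real_distribution P by (rule realdist_P)
  show "real_distribution (distr P borel T)" by (intro real_distribution_distr) simp
  show "real_distribution (uniform_measure lborel {0..1::real})"
    using U_prob by (simp add: real_distribution_def real_distribution_axioms_def)
  show "cdf (distr P borel T) = cdf (uniform_measure lborel {0..1::real})"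
  proof
    fix u :: real
    have lhs: "cdf (distr P borel T) u = measure P (T -` {..u})"
      by (simp add: cdf_def2 measure_distr)
    have rhs: "cdf (uniform_measure lborel {0..1::real}) u = measure lborel ({0..1} \<inter> {..u})"
      by (simp add: cdf_def2)
    show "cdf (distr P borel T) u = cdf (uniform_measure lborel {0..1::real}) u"
    proof (cases "u < 0")
      case True
      have "\<And>y. \<not> T y \<le> u" using True T_range(1) by (metis le_less_trans not_le)
      then have "T -` {..u} = {}" by auto
      moreover have "{0..1} \<inter> {..u} = {}" using True by auto
      ultimately show ?thesis using lhs rhs by simp
    next
      case False
      show ?thesis
      proof (cases "u < 1")
        case True
        obtain s where s: "s \<ge> 0" "H s = u" using H_hit[of u] True False by auto
        have "T -` {..u} = {-s..s}"
        proof (intro set_eqI iffI)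
          fix y assume "y \<in> T -` {..u}"
          then have "\<not> s < \<bar>y\<bar>" using H_strict[of s "\<bar>y\<bar>"] s by (auto simp: T_def)
          then show "y \<in> {-s..s}" by auto
        next
          fix y assume "y \<in> {-s..s}"
          then show "y \<in> T -` {..u}" using H_mono[of "\<bar>y\<bar>" s] s by (auto simp: T_def)
        qed
        moreover have "{0..1} \<inter> {..u} = {0..u}" using True by auto
        ultimately show ?thesis using lhs rhs measure_P_sym[OF s(1)] s False by simp
      next
        case False
        have "\<And>y. T y \<le> u" using False T_range(2) by (metis less_imp_le not_le order.strict_trans2)
        then have "T -` {..u} = UNIV" by auto
        moreover have "{0..1} \<inter> {..u} = {0..1}" using False by auto
        moreover have "measure P UNIV = 1" using prob_space by (metis space_eq_univ)
        ultimately show ?thesis using lhs rhs by (simp only:) simp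
      qed
    qed
  qed
qed


lemma T_lborel[measurable]: "T \<in> lborel \<rightarrow>\<^sub>M lborel"
  using T_borel by (simp add: measurable_lborel1 measurable_lborel2)

lemma T_lebl[measurable]: "T \<in> lebesgue \<rightarrow>\<^sub>M lborel"
  by (intro measurable_completion T_lborel)

lemma T_X[measurable]: "T \<in> X \<rightarrow>\<^sub>M borel"
  by (subst measurable_cong_sets[OF sets_X refl]) (intro measurable_completion, simp add: measurable_lborel1)

lemma null_pre_X: "N \<in> null_sets lborel \<Longrightarrow> emeasure X (T -` N) = 0"
proof -
  assume N: "N \<in> null_sets lborel"
  have Nb: "N \<in> sets borel" using N by auto
  have pre: "T -` N \<in> sets borel" using measurable_sets[OF T_borel Nb] by simp
  have "emeasure (distr P borel T) N = emeasure P (T -` N)"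
    using Nb by (subst emeasure_distr) (auto simp: P_def)
  moreover have "emeasure (uniform_measure lborel {0..1::real}) N = 0"
  proof -
    have "emeasure lborel ({0..1} \<inter> N) = 0"
    proof -
      have "{0..1} \<inter> N \<in> null_sets lborel" using N by (intro null_sets_subset[OF N]) auto
      then show ?thesis by auto
    qed
    then show ?thesis using Nb by (subst emeasure_uniform_measure) auto
  qed
  ultimately show ?thesis using push emeasure_P[OF pre] by simp
qed

lemma null_pre_leb: "N \<in> null_sets lborel \<Longrightarrow> T -` N \<in> null_sets lebesgue"
proof -
  assume N: "N \<in> null_sets lborel"
  have Nb: "N \<in> sets borel" using N by auto
  have pre: "T -` N \<in> sets borel" using measurable_sets[OF T_borel Nb] by simp
  then have pre': "T -` N \<in> sets lebesgue" by simp
  show ?thesis using null_X_leb[OF pre' null_pre_X[OF N]] pre' by auto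
qed

lemma T_leb: "T \<in> lebesgue \<rightarrow>\<^sub>M lebesgue"
proof (rule completion.measurable_completion2)
  show "T \<in> lebesgue \<rightarrow>\<^sub>M lborel" by (rule T_lebl)
  show "null_sets lborel \<subseteq> null_sets (distr lebesgue lborel T)"
  proof
    fix N :: "real set" assume N: "N \<in> null_sets lborel"
    then have "emeasure (distr lebesgue lborel T) N = emeasure lebesgue (T -` N)"
      by (subst emeasure_distr) auto
    also have "\<dots> = 0" using null_pre_leb[OF N] by auto
    finally show "N \<in> null_sets (distr lebesgue lborel T)" using N by (auto simp: null_sets_def)
  qed
qed


lemma le_sq1: "0 \<le> (t::real) \<Longrightarrow> t \<le> t\<^sup>2 + 1"
proof (cases "t \<le> 1")
  case True
  then show ?thesis by (smt (verit) zero_le_power2)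
next
  case False
  then have "t * 1 \<le> t * t" by (intro mult_left_mono) auto
  then show ?thesis by (simp add: power2_eq_square)
qed


lemma main:
  fixes \<phi> :: "real \<Rightarrow> real" and c Q0 :: real
  assumes phi_nonneg: "\<forall>y\<in>{0<..<1}. \<phi> y \<ge> 0"
    and P1: "set_integrable lebesgue {0<..<1} (\<lambda>y. (\<phi> y)\<^sup>2)"
    and P4: "\<forall>x\<in>{0<..<1}. (LINT y:{1-x<..<1}|lebesgue. \<phi> y) > 0"
    and c: "0 \<le> c" and Q0: "\<And>q. q \<ge> Q0 \<Longrightarrow> g q / g (-q) > c"
  shows "ereal c \<le> Gamma_unif \<phi> g"
proof -
  define Q where "Q = max Q0 1"
  define x where "x = 1 - H Q"
  have Qpos: "0 < Q" by (simp add: Q_def)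
  have x01: "0 < x" "x < 1"
    using H_lt1[of Q] H_strict[of 0 Q] Qpos H_0 by (auto simp: x_def)
  define D where "D = (LINT y:{1-x<..<1}|lebesgue. \<phi> y)"
  have Dpos: "0 < D" using P4 x01 by (simp add: D_def)
  define \<phi>0 where "\<phi>0 u = \<phi> u * indicator {1-x..<1} u" for u
  have sq_meas[measurable]: "(\<lambda>y. indicator {0<..<1} y *\<^sub>R (\<phi> y)\<^sup>2) \<in> borel_measurable lebesgue"
    using P1 by (simp add: set_integrable_def borel_measurable_integrable)
  have sets1[measurable]: "{1-x..<1} \<in> sets lebesgue" "{0<..<1::real} \<in> sets lebesgue"
    "{1-x<..<1} \<in> sets lebesgue"
    "{0<..} \<in> sets (lebesgue :: real measure)" "{..<0} \<in> sets (lebesgue :: real measure)" by auto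
  have phi0_eq: "\<phi>0 = (\<lambda>u. sqrt (indicator {0<..<1} u *\<^sub>R (\<phi> u)\<^sup>2) * indicator {1-x..<1} u)"
  proof
    fix u show "\<phi>0 u = sqrt (indicator {0<..<1} u *\<^sub>R (\<phi> u)\<^sup>2) * indicator {1-x..<1} u"
    proof (cases "u \<in> {1-x..<1}")
      case True
      then have "u \<in> {0<..<1}" using x01 by auto
      then show ?thesis using True phi_nonneg by (simp add: \<phi>0_def)
    qed (simp add: \<phi>0_def)
  qed
  have phi0_meas[measurable]: "\<phi>0 \<in> borel_measurable lebesgue"
    unfolding phi0_eq by measurable
  have phi0_nonneg: "0 \<le> \<phi>0 u" for u
    using phi_nonneg x01 by (auto simp: \<phi>0_def indicator_def)
  have phi0_int: "integrable lebesgue \<phi>0"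
  proof (rule Bochner_Integration.integrable_bound)
    show "integrable lebesgue (\<lambda>y. indicator {0<..<1} y *\<^sub>R (\<phi> y)\<^sup>2 + indicator {0<..<1} y)"
    proof (intro Bochner_Integration.integrable_add)
      show "integrable lebesgue (\<lambda>y. indicator {0<..<1} y *\<^sub>R (\<phi> y)\<^sup>2)"
        using P1[unfolded set_integrable_def] .
      have "emeasure lebesgue {0<..<1::real} < \<infinity>" by (subst emeasure_completion) auto
      then show "integrable lebesgue (indicator {0<..<1::real} :: real \<Rightarrow> real)"
        by (intro integrable_real_indicator) auto
    qed
    show "AE y in lebesgue. norm (\<phi>0 y) \<le> norm (indicator {0<..<1} y *\<^sub>R (\<phi> y)\<^sup>2 + (indicator {0<..<1} y :: real))"
    proof (rule AE_I2)
      fix y show "norm (\<phi>0 y) \<le> norm (indicator {0<..<1} y *\<^sub>R (\<phi> y)\<^sup>2 + (indicator {0<..<1} y :: real))"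
      proof (cases "y \<in> {1-x..<1}")
        case True
        then have y: "y \<in> {0<..<1}" using x01 by auto
        then show ?thesis using True phi_nonneg le_sq1[of "\<phi> y"] by (simp add: \<phi>0_def)
      qed (simp add: \<phi>0_def)
    qed
  qed simp
  have D_eq: "D = integral\<^sup>L lebesgue \<phi>0"
  proof -
    have "D = integral\<^sup>L lebesgue (\<lambda>y. indicator {1-x<..<1} y * \<phi>0 y)"
      unfolding D_def set_lebesgue_integral_def
      by (intro Bochner_Integration.integral_cong) (auto simp: \<phi>0_def indicator_def)
    also have "\<dots> = integral\<^sup>L lebesgue \<phi>0"
    proof (rule integral_cong_AE)
      have "{1-x} \<in> null_sets lebesgue" by (simp add: null_sets_completionI)
      from AE_not_in[OF this] show "AE y in lebesgue. indicator {1-x<..<1} y * \<phi>0 y = \<phi>0 y"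
        by eventually_elim (auto simp: \<phi>0_def indicator_def)
    qed measurable
    finally show ?thesis .
  qed
  obtain \<psi> where psi_b[measurable]: "\<psi> \<in> borel_measurable lborel" and ae: "AE u in lborel. \<phi>0 u = \<psi> u"
    using completion_ex_borel_measurable_real[OF phi0_meas] by blast
  have psi_borel[measurable]: "\<psi> \<in> borel_measurable borel" using psi_b by (simp add: measurable_lborel1)
  have psi_leb[measurable]: "\<psi> \<in> borel_measurable lebesgue" by (intro measurable_completion psi_b)
  have ae_leb: "AE u in lebesgue. \<phi>0 u = \<psi> u" by (rule AE_completion[OF ae])
  have psi_int: "integrable lborel \<psi>"
  proof -
    have "integrable lebesgue \<psi>" using integrable_cong_AE_imp[OF phi0_int psi_leb ae_leb] .
    then show ?thesis using integrable_completion[OF psi_b] by simp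
  qed
  have int_psi: "integral\<^sup>L lebesgue \<phi>0 = integral\<^sup>L lborel \<psi>"
    using integral_cong_AE[OF phi0_meas psi_leb ae_leb] integral_completion[OF psi_b] by simp
  have psi_zero: "AE u in lborel. \<psi> u = indicator {0..1} u * \<psi> u"
  proof (rule AE_mp[OF ae AE_I2], rule impI)
    fix u assume "\<phi>0 u = \<psi> u"
    then show "\<psi> u = indicator {0..1} u * \<psi> u"
      using x01 by (cases "1 - x \<le> u \<and> u < 1") (auto simp: \<phi>0_def indicator_def)
  qed
  define U where "U = uniform_measure lborel {0..1::real}"
  have U_dens: "U = density lborel (\<lambda>u. ennreal (indicator {0..1} u))"
    by (simp add: U_def uniform_measure_def ennreal_indicator divide_ennreal_def)
  have U_int: "integrable U \<psi>" and U_integral: "integral\<^sup>L U \<psi> = integral\<^sup>L lborel \<psi>"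
  proof -
    have "integrable lborel (\<lambda>u. indicator {0..1} u * \<psi> u)"
      using integrable_cong_AE_imp[OF psi_int _ psi_zero] by simp
    then show "integrable U \<psi>" unfolding U_dens by (subst integrable_real_density) auto
    have "integral\<^sup>L U \<psi> = integral\<^sup>L lborel (\<lambda>u. indicator {0..1} u * \<psi> u)"
      unfolding U_dens by (subst integral_real_density) auto
    also have "\<dots> = integral\<^sup>L lborel \<psi>"
      by (rule integral_cong_AE) (use psi_zero in \<open>auto elim: AE_mp\<close>)
    finally show "integral\<^sup>L U \<psi> = integral\<^sup>L lborel \<psi>" .
  qed
  have psiT_meas_X[measurable]: "(\<lambda>y. \<psi> (T y)) \<in> borel_measurable X" by measurable
  have intX_psiT: "integrable X (\<lambda>y. \<psi> (T y))" and intgX_psiT: "integral\<^sup>L X (\<lambda>y. \<psi> (T y)) = D"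
  proof -
    have P_T: "T \<in> P \<rightarrow>\<^sub>M borel" by (simp add: P_def)
    have "integrable (distr P borel T) \<psi>" using U_int push by (simp add: U_def)
    then have "integrable P (\<lambda>y. \<psi> (T y))" by (subst (asm) integrable_distr_eq[OF P_T]) auto
    then show "integrable X (\<lambda>y. \<psi> (T y))" unfolding P_def by (subst (asm) integrable_distr_eq[OF meas_id]) auto
    have "integral\<^sup>L X (\<lambda>y. \<psi> (T y)) = integral\<^sup>L P (\<lambda>y. \<psi> (T y))"
      unfolding P_def by (subst integral_distr[OF meas_id]) auto
    also have "\<dots> = integral\<^sup>L (distr P borel T) \<psi>"
      by (subst integral_distr[OF P_T]) auto
    also have "\<dots> = D" using push U_integral int_psi D_eq by (simp add: U_def)
    finally show "integral\<^sup>L X (\<lambda>y. \<psi> (T y)) = D" .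
  qed
  have f0_meas_leb[measurable]: "(\<lambda>y. \<phi>0 (T y)) \<in> borel_measurable lebesgue"
    using measurable_compose[OF T_leb phi0_meas] .
  have f0_meas_X[measurable]: "(\<lambda>y. \<phi>0 (T y)) \<in> borel_measurable X"
    by (subst measurable_cong_sets[OF sets_X refl]) (rule f0_meas_leb)
  obtain N where N: "N \<in> null_sets lborel" "{u \<in> space lborel. \<not> (\<phi>0 u = \<psi> u)} \<subseteq> N"
    using ae by (rule AE_E) blast
  have aeX: "AE y in X. \<psi> (T y) = \<phi>0 (T y)"
  proof (rule AE_I')
    have Nb: "N \<in> sets borel" using N(1) by auto
    have "T -` N \<in> sets borel" using measurable_sets[OF T_borel Nb] by simp
    then show "T -` N \<in> null_sets X" using null_pre_X[OF N(1)] by (auto simp: null_sets_def)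
    show "{y \<in> space X. \<not> \<psi> (T y) = \<phi>0 (T y)} \<subseteq> T -` N" using N(2) by (auto simp: subset_iff)
  qed
  have intX_f0: "integrable X (\<lambda>y. \<phi>0 (T y))"
    using integrable_cong_AE_imp[OF intX_psiT f0_meas_X aeX] .
  have intgX_f0: "integral\<^sup>L X (\<lambda>y. \<phi>0 (T y)) = D"
    using integral_cong_AE[OF psiT_meas_X f0_meas_X aeX] intgX_psiT by simp
  have g_nn: "AE y in lebesgue. 0 \<le> g y" using g_pos by (simp add: less_imp_le)
  define w where "w y = g y * \<phi>0 (T y)" for y
  have w_meas[measurable]: "w \<in> borel_measurable lebesgue" unfolding w_def[abs_def] by measurable
  have w_int: "integrable lebesgue w"
    using intX_f0 unfolding distG_def w_def[abs_def]
    by (subst (asm) integrable_real_density) (auto simp: g_nn)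
  have w_integral: "integral\<^sup>L lebesgue w = D"
    using intgX_f0 unfolding distG_def w_def[abs_def]
    by (subst (asm) integral_real_density) (auto simp: g_nn)
  define Nn where "Nn = integral\<^sup>L lebesgue (\<lambda>y. w y * indicator {0<..} y)"
  define Mm where "Mm = integral\<^sup>L lebesgue (\<lambda>y. w y * indicator {..<0} y)"
  have int_pos: "integrable lebesgue (\<lambda>y. w y * indicator {0<..} y)"
    by (intro integrable_real_mult_indicator w_int) auto
  have int_neg: "integrable lebesgue (\<lambda>y. w y * indicator {..<0} y)"
    by (intro integrable_real_mult_indicator w_int) auto
  have split: "D = Nn + Mm"
  proof -
    have "integral\<^sup>L lebesgue w = integral\<^sup>L lebesgue (\<lambda>y. w y * indicator {0<..} y + w y * indicator {..<0} y)"
    proof (rule integral_cong_AE)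
      have "{0::real} \<in> null_sets lebesgue" by (simp add: null_sets_completionI)
      from AE_not_in[OF this] show "AE y in lebesgue. w y = w y * indicator {0<..} y + w y * indicator {..<0} y"
        by eventually_elim (auto simp: indicator_def)
    qed measurable
    also have "\<dots> = Nn + Mm" unfolding Nn_def Mm_def
      by (rule Bochner_Integration.integral_add[OF int_pos int_neg])
    finally show ?thesis using w_integral by simp
  qed
  define r where "r y = g (-y) * \<phi>0 (T y) * indicator {0<..} y" for y
  have r_eq: "(\<lambda>y. w (0 + -1 * y) * indicator {..<0} (0 + -1 * y)) = r"
    by (auto simp: r_def w_def T_even indicator_def)
  have r_int: "integrable lebesgue r"
    using lebesgue_integrable_real_affine[OF int_neg, of "-1" 0] unfolding r_eq by simp
  have Mm_eq: "Mm = integral\<^sup>L lebesgue r"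
    unfolding Mm_def using lebesgue_integral_real_affine[of "-1" "\<lambda>y. w y * indicator {..<0} y" 0]
    unfolding r_eq by simp
  have w_nn: "0 \<le> w y" for y using g_pos[of y] phi0_nonneg by (simp add: w_def)
  have Mm_nn: "0 \<le> Mm" unfolding Mm_def by (rule Bochner_Integration.integral_nonneg) (simp add: w_nn)
  have pt: "c * r y \<le> w y * indicator {0<..} y" for y
  proof (cases "0 < y \<and> \<phi>0 (T y) \<noteq> 0")
    case False
    then show ?thesis by (auto simp: r_def indicator_def w_nn)
  next
    case True
    then have y: "0 < y" and ne: "\<phi>0 (T y) \<noteq> 0" by auto
    have Ty: "T y = H y" using y by (simp add: T_def)
    have "1 - x \<le> T y" using ne by (auto simp: \<phi>0_def indicator_def)
    then have "H Q \<le> H y" using Ty by (simp add: x_def)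
    then have "Q \<le> y" using H_strict[of y Q] y by (meson less_imp_le not_le)
    then have "Q0 \<le> y" by (simp add: Q_def)
    then have "c < g y / g (-y)" by (rule Q0)
    then have "c * g (-y) < g y" using g_pos[of "-y"] by (simp add: less_divide_eq)
    then have "c * g (-y) * \<phi>0 (T y) \<le> g y * \<phi>0 (T y)"
      using phi0_nonneg[of "T y"] by (intro mult_right_mono) auto
    then show ?thesis using y by (simp add: r_def w_def indicator_def mult_ac)
  qed
  have NM: "c * Mm \<le> Nn"
  proof -
    have "c * Mm = integral\<^sup>L lebesgue (\<lambda>y. c * r y)" by (simp add: Mm_eq)
    also have "\<dots> \<le> Nn" unfolding Nn_def
      by (rule Bochner_Integration.integral_mono) (use r_int int_pos pt in auto)
    finally show ?thesis .
  qed
  have num: "(LINT y:{0<..}|X. \<phi> (cdfG g y - cdfG g (-y)) * indicator {t. cdfG g t - cdfG g (-t) \<ge> 1 - x} y) = Nn"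
  proof -
    have "(LINT y:{0<..}|X. \<phi> (cdfG g y - cdfG g (-y)) * indicator {t. cdfG g t - cdfG g (-t) \<ge> 1 - x} y)
        = integral\<^sup>L X (\<lambda>y. indicator {0<..} y * \<phi>0 (T y))"
      unfolding set_lebesgue_integral_def
    proof (intro Bochner_Integration.integral_cong refl)
      fix y :: real
      show "indicator {0<..} y *\<^sub>R (\<phi> (cdfG g y - cdfG g (-y)) * indicator {t. cdfG g t - cdfG g (-t) \<ge> 1 - x} y)
          = indicator {0<..} y * \<phi>0 (T y)"
      proof (cases "0 < y")
        case True
        then have "H y < 1" using H_lt1[of y] by simp
        then show ?thesis using True by (simp add: T_def H_def F_def \<phi>0_def indicator_def)
      qed (simp add: indicator_def)
    qed
    also have "\<dots> = integral\<^sup>L lebesgue (\<lambda>y. g y * (indicator {0<..} y * \<phi>0 (T y)))"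
      unfolding distG_def by (subst integral_real_density) (auto simp: g_nn)
    also have "\<dots> = Nn" unfolding Nn_def w_def by (simp add: mult_ac)
    finally show ?thesis .
  qed
  have pi_eq: "pi_unif \<phi> g x = Nn / D"
    unfolding pi_unif_def num D_def ..
  have odds_ge: "ereal c \<le> odds (pi_unif \<phi> g x)"
  proof (cases "Nn / D = 1")
    case True then show ?thesis by (simp add: pi_eq odds_def)
  next
    case False
    then have "Nn \<noteq> D" using Dpos by auto
    then have Mpos: "0 < Mm" using split Mm_nn by auto
    have e1: "1 - Nn / D = Mm / D" using Dpos split by (simp add: field_simps)
    have "Nn / D / (Mm / D) = Nn / Mm" using Dpos Mpos by (simp add: field_simps)
    then have eq3: "Nn / D / (1 - Nn / D) = Nn / Mm" by (simp only: e1)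
    have ineq: "c \<le> Nn / Mm" using NM Mpos by (simp add: pos_le_divide_eq)
    have "c \<le> Nn / D / (1 - Nn / D)" unfolding eq3 by (rule ineq)
    then show ?thesis using False unfolding pi_eq odds_def by simp
  qed
  also have "\<dots> \<le> Gamma_unif \<phi> g"
    unfolding Gamma_unif_def using x01 by (intro SUP_upper) auto
  finally show ?thesis .
qed
end

theorem theorem3:
  fixes \<phi> g :: "real \<Rightarrow> real"
  assumes phi_nonneg: "\<forall>y\<in>{0<..<1}. \<phi> y \<ge> 0"
    and P1: "set_integrable lebesgue {0<..<1} (\<lambda>y. (\<phi> y)\<^sup>2)"
    and P2: "{y\<in>{0<..<1}. \<not> isCont \<phi> y} \<in> null_sets lebesgue"
    and P3: "\<exists>a\<in>{0..<1/2}. antimono_on {0<..<a} \<phi> \<and> mono_on {1-a<..<1} \<phi>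
                  \<and> bounded (\<phi> ` {a<..<1-a})"
    and P4: "\<forall>x\<in>{0<..<1}. (LINT y:{1-x<..<1}|lebesgue. \<phi> y) > 0"
    and g_meas: "g \<in> borel_measurable lebesgue"
    and g_pos: "\<forall>x. g x > 0"
    and g_prob: "emeasure (distG g) UNIV = 1"
  shows "Gamma_unif \<phi> g \<ge> Liminf at_top (\<lambda>q. ereal (g q / g (-q)))"
proof -
  interpret gctx g using g_meas g_pos g_prob by unfold_locales auto
  have G0: "ereal 0 \<le> Gamma_unif \<phi> g"
  proof (rule main[OF phi_nonneg P1 P4, of 0 0])
    fix q :: real show "0 < g q / g (-q)" using g_pos by simp
  qed simp
  show ?thesis
  proof (rule dense_le)
    fix y assume y: "y < Liminf at_top (\<lambda>q. ereal (g q / g (-q)))"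
    show "y \<le> Gamma_unif \<phi> g"
    proof (cases "y \<le> 0")
      case True then show ?thesis using G0 by (simp add: zero_ereal_def order_trans)
    next
      case False
      have "y \<noteq> \<infinity>" using y by auto
      with False obtain c where c: "y = ereal c" "0 < c" by (cases y) auto
      have "eventually (\<lambda>q. y < ereal (g q / g (-q))) at_top" by (rule less_LiminfD[OF y])
      then obtain Q0 where Q0: "\<And>q. q \<ge> Q0 \<Longrightarrow> y < ereal (g q / g (-q))"
        by (auto simp: eventually_at_top_linorder)
      have "ereal c \<le> Gamma_unif \<phi> g"
      proof (rule main[OF phi_nonneg P1 P4, of c Q0])
        fix q :: real assume "Q0 \<le> q" then show "c < g q / g (-q)" using Q0[of q] c by simp
      qed (use c in simp)
      then show ?thesis using c by simp
    qed
  qed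
qed

end
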